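(* Let $n\ge 1$, let $a_1<a_2$ be constants, and let $f$ be continuous on $(0,\infty)$ with $f(t)\to 0$ as $t\to\infty$. Assume that for every constant $c\in[a_1,a_2]$, every nontrivial solution of $y''+\frac{n-1}{t}y'+\frac{c}{t^2}y=0$ has infinitely many roots (in $(T,\infty)$ for every $T>0$). Then for every constant $a\in(a_1,a_2)$, every nontrivial solution of \[ y''+\frac{n-1}{t}y'+\frac{a+f(t)}{t^2}y=0 \] has infinitely many roots (in $(T,\infty)$ for every $T>0$). *)

theory Defs
  imports Complex_Main
begin

definition is_solution :: "nat \<Rightarrow> (real \<Rightarrow> real) \<Rightarrow> (real \<Rightarrow> real) \<Rightarrow> bool" where
  "is_solution n q y \<longleftrightarrow>
     (\<exists>y' y''. \<forall>t>0. (y has_real_derivative y' t) (at t)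
                    \<and> (y' has_real_derivative y'' t) (at t)
                    \<and> y'' t + (real n - 1) / t * y' t + q t / t\<^sup>2 * y t = 0)"

definition nontrivial :: "(real \<Rightarrow> real) \<Rightarrow> bool" where
  "nontrivial y \<longleftrightarrow> (\<exists>t>0. y t \<noteq> 0)"

definition oscillatory :: "(real \<Rightarrow> real) \<Rightarrow> bool" where
  "oscillatory y \<longleftrightarrow> (\<forall>T>0. infinite {t. T < t \<and> y t = 0})"

end

theory Submission imports Defs begin

lemma du:
  assumes "t > 0"
  shows "((\<lambda>t. exp (- m * ln t) * sin (b * ln t)) has_real_derivative
     exp (- m * ln t) * (b * cos (b * ln t) - m * sin (b * ln t)) / t) (at t)"
  apply (rule derivative_eq_intros refl | rule assms)+
  using assms apply simp_all
  apply (simp add: field_simps power2_eq_square)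
  done

lemma dV:
  assumes "t > 0"
  shows "((\<lambda>t. exp (m * ln t) * (b * cos (b * ln t) - m * sin (b * ln t))) has_real_derivative
     - (m^2 + b^2) * exp (m * ln t) * sin (b * ln t) / t) (at t)"
  apply (rule derivative_eq_intros refl | rule assms)+
  using assms apply simp_all
  apply (simp add: field_simps power2_eq_square)
  done

lemma dP:
  assumes "t > 0" "(y' has_real_derivative y'' t) (at t)"
  shows "((\<lambda>t. exp (k * ln t) * y' t) has_real_derivative
     exp (k * ln t) * (y'' t + k / t * y' t)) (at t)"
  apply (rule derivative_eq_intros refl | rule assms)+
  using assms apply simp_all
  apply (simp add: field_simps)
  done

lemma core:
  fixes n::nat and q y y' y'' :: "real \<Rightarrow> real" and b c T0 :: real
  assumes b: "b > 0" and cdef: "c = ((real n - 2)/2)^2 + b^2"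
    and T0: "T0 > 0"
    and sol: "\<forall>t>0. (y has_real_derivative y' t) (at t) \<and> (y' has_real_derivative y'' t) (at t)
       \<and> y'' t + (real n - 1) / t * y' t + q t / t^2 * y t = 0"
    and pos: "\<forall>t>T0. y t > 0 \<and> c < q t"
  shows False
proof -
  define m where "m = (real n - 2)/2"
  define k where "k = real n - 1"
  have km: "k = 2*m + 1" by (simp add: m_def k_def field_simps)
  have cm: "c = m^2 + b^2" unfolding m_def using cdef by simp
  define u where "u t = exp (- m * ln t) * sin (b * ln t)" for t
  define V where "V t = exp (m * ln t) * (b * cos (b * ln t) - m * sin (b * ln t))" for t
  define P where "P t = exp (k * ln t) * y' t" for t
  define W where "W t = u t * P t - y t * V t" for t
  define W' where "W' t = (c - q t) * y t * exp (m * ln t) * sin (b * ln t) / t" for t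
  have dW: "(W has_real_derivative W' t) (at t)" if t: "t > 0" for t
  proof -
    have du: "(u has_real_derivative exp (- m * ln t) * (b * cos (b * ln t) - m * sin (b * ln t)) / t) (at t)"
      unfolding u_def[abs_def] by (rule du[OF t])
    have dV: "(V has_real_derivative - (m^2+b^2) * exp (m * ln t) * sin (b * ln t) / t) (at t)"
      unfolding V_def[abs_def] by (rule dV[OF t])
    have dP: "(P has_real_derivative exp (k * ln t) * (y'' t + k / t * y' t)) (at t)"
      unfolding P_def[abs_def] using dP[OF t] sol t by blast
    have dy: "(y has_real_derivative y' t) (at t)" using sol t by blast
    have "y'' t + k / t * y' t + q t / t^2 * y t = 0" using sol t unfolding k_def by blast
    hence yeq: "y'' t = - (k / t * y' t) - q t / t^2 * y t" by linarith
    have "(W has_real_derivative u t * (exp (k * ln t) * (y'' t + k / t * y' t))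
        + (exp (- m * ln t) * (b * cos (b * ln t) - m * sin (b * ln t)) / t) * P t
        - (y t * (- (m^2+b^2) * exp (m * ln t) * sin (b * ln t) / t) + y' t * V t)) (at t)"
      unfolding W_def[abs_def] by (intro DERIV_diff DERIV_mult' du dV dP dy)
    moreover have "u t * (exp (k * ln t) * (y'' t + k / t * y' t))
        + (exp (- m * ln t) * (b * cos (b * ln t) - m * sin (b * ln t)) / t) * P t
        - (y t * (- (m^2+b^2) * exp (m * ln t) * sin (b * ln t) / t) + y' t * V t) = W' t"
    proof -
      define e where "e = exp (m * ln t)"
      have e0: "e > 0" by (simp add: e_def)
      have e1: "exp (- m * ln t) = 1 / e" by (simp add: e_def exp_minus field_simps)
      have "k * ln t = m * ln t + m * ln t + ln t" unfolding km by (simp add: algebra_simps)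
      hence e2: "exp (k * ln t) = e * e * t" unfolding e_def
        using t by (simp only: exp_add exp_ln)
      show ?thesis unfolding P_def u_def V_def W'_def yeq e1 e2 cm
        using t e0 by (simp add: e_def[symmetric] field_simps power2_eq_square)
    qed
    ultimately show ?thesis by simp
  qed
  obtain j :: nat where j: "ln T0 * b / (2*pi) < real j" using reals_Archimedean2 by blast
  define t1 where "t1 = exp (real (2*j) * pi / b)"
  define t2 where "t2 = exp (real (2*j+1) * pi / b)"
  have lt1: "b * ln t1 = real (2*j) * pi" using b by (simp add: t1_def)
  have lt2: "b * ln t2 = real (2*j+1) * pi" using b by (simp add: t2_def)
  have "ln T0 < real (2*j) * pi / b" using j b pi_gt_zero by (simp add: field_simps)
  hence t1T: "T0 < t1" unfolding t1_def using T0 by (metis exp_less_cancel_iff exp_ln)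
  have t12: "t1 < t2" unfolding t1_def t2_def using b pi_gt_zero by (simp add: divide_strict_right_mono)
  obtain z where z: "t1 < z" "z < t2" and mv: "W t2 - W t1 = (t2 - t1) * W' z"
    using MVT2[OF t12, of W W'] dW t1T T0 by force
  have zT: "T0 < z" "0 < z" using z t1T T0 by auto
  have "b * ln t1 < b * ln z" "b * ln z < b * ln t2" using z b t1T T0 by auto
  hence bz: "real (2*j) * pi < b * ln z" "b * ln z < real (2*j) * pi + pi" using lt1 lt2 by (auto simp: algebra_simps)
  have "sin (b * ln z) = sin (b * ln z - real (2*j) * pi)"
    by (simp add: sin_diff sin_npi cos_npi)
  also have "\<dots> > 0" using bz by (intro sin_gt_zero) auto
  finally have sz: "sin (b * ln z) > 0" .
  have "W' z < 0" unfolding W'_def using pos zT sz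
    by (intro divide_neg_pos mult_neg_pos mult_pos_pos) auto
  hence "(t2 - t1) * W' z < 0" using t12 by (simp add: mult_pos_neg)
  hence "W t2 < W t1" using mv by linarith
  moreover have "W t1 < 0"
  proof -
    have "u t1 = 0" unfolding u_def lt1 by (simp add: sin_npi)
    moreover have "V t1 = exp (m * ln t1) * b" unfolding V_def lt1 by (simp add: sin_npi cos_npi)
    ultimately show ?thesis unfolding W_def using pos t1T b by simp
  qed
  moreover have "W t2 > 0"
  proof -
    have "u t2 = 0" unfolding u_def lt2 by (simp only: sin_npi mult_zero_right)
    moreover have "V t2 = - exp (m * ln t2) * b" unfolding V_def lt2 by (simp only: sin_npi cos_npi) simp
    ultimately show ?thesis unfolding W_def using pos t1T t12 b by simp
  qed
  ultimately show False by simp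
qed

lemma euler_sol:
  fixes n :: nat and a1 :: real
  assumes "((real n - 2)/2)^2 \<ge> a1"
  shows "\<exists>z. is_solution n (\<lambda>_. a1) z \<and> nontrivial z \<and> \<not> oscillatory z"
proof -
  define m where "m = (real n - 2)/2"
  define r where "r = - m + sqrt (m^2 - a1)"
  have "(r + m)^2 = m^2 - a1" unfolding r_def using assms unfolding m_def by simp
  hence req: "r^2 + 2*m*r + a1 = 0" by (simp add: power2_eq_square algebra_simps)
  define z where "z t = exp (r * ln t)" for t
  have "is_solution n (\<lambda>_. a1) z"
    unfolding is_solution_def
  proof (intro exI allI impI conjI)
    fix t :: real assume t: "t > 0"
    show "(z has_real_derivative r * exp (r * ln t) / t) (at t)"
      unfolding z_def[abs_def]
      apply (rule derivative_eq_intros refl | rule t)+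
      using t by simp
    show "((\<lambda>t. r * exp (r * ln t) / t) has_real_derivative r * (r - 1) * exp (r * ln t) / t^2) (at t)"
      apply (rule derivative_eq_intros refl | rule t)+
      using t apply simp_all
      by (simp add: field_simps power2_eq_square)
    have "r * (r - 1) * exp (r * ln t) / t\<^sup>2 + (real n - 1) / t * (r * exp (r * ln t) / t) + a1 / t\<^sup>2 * z t
      = exp (r * ln t) / t^2 * (r^2 + 2*m*r + a1)"
      unfolding z_def m_def using t by (simp add: field_simps power2_eq_square)
    thus "r * (r - 1) * exp (r * ln t) / t\<^sup>2 + (real n - 1) / t * (r * exp (r * ln t) / t) + a1 / t\<^sup>2 * z t = 0"
      using req by simp
  qed
  moreover have "nontrivial z" unfolding nontrivial_def z_def by (rule exI[of _ 1]) simp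
  moreover have "\<not> oscillatory z" unfolding oscillatory_def z_def
    by (auto intro!: exI[of _ 1])
  ultimately show ?thesis by blast
qed

theorem lemma3p3:
  fixes n :: nat and a1 a2 :: real and f :: "real \<Rightarrow> real"
  assumes "n \<ge> 1" and "a1 < a2"
    and "continuous_on {0<..} f"
    and "(f \<longlongrightarrow> 0) at_top"
    and "\<forall>c\<in>{a1..a2}. \<forall>y. is_solution n (\<lambda>_. c) y \<and> nontrivial y \<longrightarrow> oscillatory y"
  shows "\<forall>a\<in>{a1<..<a2}. \<forall>y. is_solution n (\<lambda>t. a + f t) y \<and> nontrivial y \<longrightarrow> oscillatory y"
proof (intro ballI allI impI)
  fix a y assume a: "a \<in> {a1<..<a2}" and hy: "is_solution n (\<lambda>t. a + f t) y \<and> nontrivial y"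
  define m where "m = (real n - 2)/2"
  have ma1: "m^2 < a1"
  proof (rule ccontr)
    assume "\<not> m^2 < a1"
    then obtain z where "is_solution n (\<lambda>_. a1) z" "nontrivial z" "\<not> oscillatory z"
      using euler_sol[of a1 n] m_def by auto
    thus False using assms(5) assms(2) by auto
  qed
  define c where "c = (a + m^2)/2"
  define b where "b = sqrt (c - m^2)"
  have ca: "c < a" "m^2 < c" using a ma1 by (auto simp: c_def)
  have b0: "b > 0" using ca by (simp add: b_def)
  have cb: "c = ((real n - 2)/2)^2 + b^2" using ca by (simp add: b_def m_def)
  obtain y' y'' where sol: "\<forall>t>0. (y has_real_derivative y' t) (at t) \<and> (y' has_real_derivative y'' t) (at t)
       \<and> y'' t + (real n - 1) / t * y' t + (a + f t) / t^2 * y t = 0"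
    using hy unfolding is_solution_def by blast
  show "oscillatory y"
  proof (rule ccontr)
    assume "\<not> oscillatory y"
    then obtain T where T: "T > 0" and fin: "finite {t. T < t \<and> y t = 0}"
      unfolding oscillatory_def by blast
    define T0 where "T0 = Max (insert T {t. T < t \<and> y t = 0})"
    have T0T: "T \<le> T0" unfolding T0_def using fin by simp
    have nz0: "y t \<noteq> 0" if "t > T0" for t
    proof
      assume "y t = 0"
      hence "t \<in> insert T {t. T < t \<and> y t = 0}" using that T0T by simp
      hence "t \<le> T0" unfolding T0_def using fin by simp
      thus False using that by simp
    qed
    have "eventually (\<lambda>t. c - a < f t) at_top"
      using order_tendstoD(1)[OF assms(4)] ca by simp
    then obtain N where N: "\<And>t. t \<ge> N \<Longrightarrow> c - a < f t" unfolding eventually_at_top_linorder by blast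
    define T2 where "T2 = max T0 N"
    have T2: "T2 > 0" using T T0T by (simp add: T2_def)
    have nz: "y t \<noteq> 0" if "t > T2" for t using nz0 that by (simp add: T2_def)
    have cq: "c < a + f t" if "t > T2" for t using N[of t] that by (simp add: T2_def)
    have cont: "isCont y t" if "t > 0" for t using sol that DERIV_isCont by blast
    have sign: "(\<forall>t>T2. y t > 0) \<or> (\<forall>t>T2. y t < 0)"
    proof (rule ccontr)
      assume "\<not> ?thesis"
      then obtain p q where p: "p > T2" "y p < 0" and q: "q > T2" "y q > 0"
        using nz by (meson linorder_neqE_linordered_idom)
      show False
      proof (cases "p \<le> q")
        case True
        then obtain x where "x \<ge> p" "x \<le> q" "y x = 0"
          using IVT[of y p 0 q] p q cont T2 by force
        thus False using nz p by force
      next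
        case False
        then obtain x where "x \<ge> q" "x \<le> p" "y x = 0"
          using IVT2[of y p 0 q] p q cont T2 by force
        thus False using nz q by force
      qed
    qed
    thus False
    proof
      assume pos: "\<forall>t>T2. y t > 0"
      show False
        by (rule core[OF b0 cb T2, of y y' y'' "\<lambda>t. a + f t"]) (use sol pos cq in auto)
    next
      assume neg: "\<forall>t>T2. y t < 0"
      have sol': "\<forall>t>0. ((\<lambda>t. - y t) has_real_derivative - y' t) (at t) \<and> ((\<lambda>t. - y' t) has_real_derivative - y'' t) (at t)
       \<and> - y'' t + (real n - 1) / t * - y' t + (a + f t) / t^2 * - y t = 0"
      proof (intro allI impI conjI)
        fix t :: real assume t: "t > 0"
        show "((\<lambda>t. - y t) has_real_derivative - y' t) (at t)" using sol t by (auto intro: DERIV_minus)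
        show "((\<lambda>t. - y' t) has_real_derivative - y'' t) (at t)" using sol t by (auto intro: DERIV_minus)
        have "y'' t + (real n - 1) / t * y' t + (a + f t) / t^2 * y t = 0" using sol t by blast
        thus "- y'' t + (real n - 1) / t * - y' t + (a + f t) / t^2 * - y t = 0" by simp
      qed
      show False
        by (rule core[OF b0 cb T2, of "\<lambda>t. - y t" "\<lambda>t. - y' t" "\<lambda>t. - y'' t" "\<lambda>t. a + f t"])
          (use sol' neg cq in auto)
    qed
  qed
qed

end
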